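(* Let $c>0$, $m=\log_2 c$ and $r\ge 0$. Then the covering map $F:H^3_1(c/4)\to T^1\mathbb{H}^2(c)$ defined in the context is an isometric immersion. Here $H^3_1(c/4)$ carries the Lorentzian metric induced from $\mathbb{R}^4_2$, and $T^1\mathbb{H}^2(c)$ carries the metric induced by the indefinite generalized Cheeger–Gromoll metric $h_{m,r}$ on $T\mathbb{H}^2(c)$. That is, $F^*(h_{m,r}|_{T^1\mathbb{H}^2(c)})$ equals the canonical metric of $H^3_1(c/4)$.
   Context: $\mathbb{R}^n_\nu$ denotes $\mathbb{R}^n$ with the metric $\langle x,y\rangle=\sum_{i=1}^{n-\nu}x^iy^i-\sum_{j=n-\nu+1}^nx^jy^j$. The anti-de Sitter space is $H^3_1(c)=\{x\in\mathbb{R}^4_2:(x^1)^2+(x^2)^2-(x^3)^2-(x^4)^2=-1/c\}$ with the induced metric. Write $z_1=x^1+\sqrt{-1}x^2$, $z_2=x^3+\sqrt{-1}x^4$, so that $|z_1|^2-|z_2|^2=-1/c$ on $H^3_1(c)$. On $H^3_1(1)$ define the vector fields - $X_1(x)=(x^4,x^3,x^2,x^1)$, - $X_2(x)=(x^3,-x^4,x^1,-x^2)$, - $X_3(x)=(-x^2,x^1,-x^4,x^3)$. The hyperbolic plane is $\mathbb{H}^2(c)=\{x\in\mathbb{R}^3_1:(x^1)^2+(x^2)^2-(x^3)^2=-1/c,\ x^3>0\}$ with the induced Riemannian metric. Its unit tangent bundle is $T^1\mathbb{H}^2(c)=\{(p,v)\in\mathbb{R}^3_1\times\mathbb{R}^3_1: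 p\in\mathbb{H}^2(c),\ \langle v,v\rangle=1,\ \langle p,v\rangle=0\}$, with projection $\pi(p,v)=p$. For $x\in H^3_1(1)$ let $A_x=\sqrt{-1}\begin{pmatrix}\bar z_2&-z_1\\ \bar z_1&-z_2\end{pmatrix}\in\mathrm{SU}(1,1)$. Let $e_1=\begin{pmatrix}0&-\sqrt{-1}\\ \sqrt{-1}&0\end{pmatrix}$, $e_2=\begin{pmatrix}0&1\\1&0\end{pmatrix}$, $e_3=\begin{pmatrix}\sqrt{-1}&0\\0&-\sqrt{-1}\end{pmatrix}$. These form a pseudo-orthonormal basis of $\mathfrak{su}(1,1)$ for $\langle X,Y\rangle=\tfrac12\mathrm{Tr}(XY)$, with $\langle e_3,e_3\rangle=-1$. Identify $\mathfrak{su}(1,1)$ with $\mathbb{R}^3_1$ via coordinates in this basis. Then - $A_xe_1A_x^{-1}=(-\mathrm{Re}(z_1^2+\bar z_2^2),\ -\mathrm{Im}(z_1^2+\bar z_2^2),\ -2\mathrm{Re}(z_1z_2))$, - $A_xe_2A_x^{-1}=(-\mathrm{Im}(z_1^2-\bar z_2^2),\ \mathrm{Re}(z_1^2-\bar z_2^2),\ -2\mathrm{Im}(z_1z_2))$, - $A_xe_3A_x^{-1}=(2\mathrm{Re}(z_1\bar z_2),\ 2\mathrm{Im}(z_1\bar z_2),\ |z_1|^2+|z_2|^2)$. The map $F:H^3_1(c/4)\to T^1\mathbb{H}^2(c)$ is $$F(2x/\sqrt c)=\big(\tfrac1{\sqrt c}A_xe_3A_x^{-1},\ A_xe_1A_x^{-1}\big),\qquad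 x\in H^3_1(1),$$ i.e. the composition of the homothety $2x/\sqrt c\mapsto x$, the map $x\mapsto A_x$, the adjoint representation $\rho:\mathrm{SU}(1,1)\to\mathrm{SO}^+(1,2)$, and $(c_1\,c_2\,c_3)\mapsto(c_3/\sqrt c,c_1)$. Lifts: $T\mathbb{H}^2(c)\subset\mathbb{R}^3_1\times\mathbb{R}^3_1$. For $(p,e)\in T\mathbb{H}^2(c)$ and $X\in T_p\mathbb{H}^2(c)$: - the vertical lift $X^v$ is the velocity at $0$ of $t\mapsto(p,e+tX)$; - the horizontal lift $X^h$ is the velocity at $0$ of $t\mapsto(\gamma(t),V(t))$, where $\gamma(0)=p$, $\dot\gamma(0)=X$, and $V$ is Levi-Civita parallel along $\gamma$ with $V(0)=e$. Indefinite generalized Cheeger–Gromoll metric: for $m\in\mathbb{R}$ and $r\ge0$, $h_{m,r}$ on $T\mathbb{H}^2(c)$ is given at $(p,e)$ by - $h_{m,r}(X^h,Y^h)=\langle X,Y\rangle$, - $h_{m,r}(X^h,Y^v)=0$, - $h_{m,r}(X^v,Y^v)=-\omega^m(\langle X,Y\rangle+r\langle X,e\rangle\langle Y,e\rangle)$, where $\omega=1/(1+\langle e,e\rangle)$. *)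

theory Defs
  imports "HOL-Analysis.Analysis"
begin

definition mink4 :: "real^4 \<Rightarrow> real^4 \<Rightarrow> real" where
  "mink4 x y = x$1 * y$1 + x$2 * y$2 - x$3 * y$3 - x$4 * y$4"

definition mink3 :: "real^3 \<Rightarrow> real^3 \<Rightarrow> real" where
  "mink3 x y = x$1 * y$1 + x$2 * y$2 - x$3 * y$3"

definition AdS :: "real \<Rightarrow> (real^4) set" where
  "AdS c = {x. mink4 x x = - 1 / c}"

definition TanAdS :: "real^4 \<Rightarrow> (real^4) set" where
  "TanAdS y = {W. mink4 y W = 0}"

definition H2 :: "real \<Rightarrow> (real^3) set" where
  "H2 c = {p. mink3 p p = - 1 / c \<and> p$3 > 0}"

definition T1H2 :: "real \<Rightarrow> ((real^3) \<times> (real^3)) set" where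
  "T1H2 c = {(p, v). p \<in> H2 c \<and> mink3 v v = 1 \<and> mink3 p v = 0}"

definition z1 :: "real^4 \<Rightarrow> complex" where "z1 x = Complex (x$1) (x$2)"
definition z2 :: "real^4 \<Rightarrow> complex" where "z2 x = Complex (x$3) (x$4)"

text \<open>Coordinates of A_x e_1 A_x^{-1} and A_x e_3 A_x^{-1} in the basis e_1,e_2,e_3.\<close>
definition rho1 :: "real^4 \<Rightarrow> real^3" where
  "rho1 x = vector [- Re ((z1 x)\<^sup>2 + (cnj (z2 x))\<^sup>2),
                    - Im ((z1 x)\<^sup>2 + (cnj (z2 x))\<^sup>2),
                    - 2 * Re (z1 x * z2 x)]"

definition rho3 :: "real^4 \<Rightarrow> real^3" where
  "rho3 x = vector [2 * Re (z1 x * cnj (z2 x)),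
                    2 * Im (z1 x * cnj (z2 x)),
                    (cmod (z1 x))\<^sup>2 + (cmod (z2 x))\<^sup>2]"

text \<open>F(2x/sqrt c) = (A_x e_3 A_x^{-1} / sqrt c, A_x e_1 A_x^{-1}); written as a
  (polynomial) map on all of R^4, evaluated at y = 2x/sqrt c.\<close>
definition Fmap :: "real \<Rightarrow> real^4 \<Rightarrow> (real^3) \<times> (real^3)" where
  "Fmap c y = (let x = (sqrt c / 2) *\<^sub>R y in ((1 / sqrt c) *\<^sub>R rho3 x, rho1 x))"

text \<open>Tangential projection onto T_p H^2(c) (normal direction p, <p,p> = -1/c).\<close>
definition tanproj :: "real \<Rightarrow> real^3 \<Rightarrow> real^3 \<Rightarrow> real^3" where
  "tanproj c p Z = Z + (c * mink3 Z p) *\<^sub>R p"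

text \<open>Z is the horizontal lift X^h at (p,e): velocity at 0 of (gamma, V) where gamma is a
  curve in H^2(c) with gamma(0)=p, gamma'(0)=X, and V is a vector field tangent to H^2(c)
  along gamma, Levi-Civita parallel (tangential part of V' vanishes), V(0)=e.\<close>
definition hlift :: "real \<Rightarrow> real^3 \<Rightarrow> real^3 \<Rightarrow> real^3 \<Rightarrow> (real^3) \<times> (real^3) \<Rightarrow> bool" where
  "hlift c p e X Z \<longleftrightarrow>
     (\<exists>(\<gamma>::real \<Rightarrow> real^3) (V::real \<Rightarrow> real^3) \<epsilon>. \<epsilon> > 0 \<and> \<gamma> 0 = p \<and> V 0 = e \<and>
        (\<forall>t\<in>{-\<epsilon><..<\<epsilon>}. \<gamma> t \<in> H2 c \<and> mink3 (\<gamma> t) (V t) = 0 \<and>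
            \<gamma> differentiable (at t) \<and> V differentiable (at t) \<and>
            tanproj c (\<gamma> t) (vector_derivative V (at t)) = 0) \<and>
        vector_derivative \<gamma> (at 0) = X \<and>
        Z = (X, vector_derivative V (at 0)))"

text \<open>The vertical lift Y^v at (p,e) is the velocity of t \<mapsto> (p, e + tY), i.e. (0,Y).\<close>
definition vlift :: "real^3 \<Rightarrow> (real^3) \<times> (real^3)" where
  "vlift Y = (0, Y)"

definition hv_decomp :: "real \<Rightarrow> real^3 \<Rightarrow> real^3 \<Rightarrow> (real^3) \<times> (real^3) \<Rightarrow> real^3 \<Rightarrow> real^3 \<Rightarrow> bool" where
  "hv_decomp c p e Z X Y \<longleftrightarrow>
     mink3 p Y = 0 \<and> (\<exists>H. hlift c p e X H \<and> Z = H + vlift Y)"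

definition hmr_form :: "real \<Rightarrow> real \<Rightarrow> real^3 \<Rightarrow> real^3 \<Rightarrow> real^3 \<Rightarrow> real^3 \<Rightarrow> real^3 \<Rightarrow> real" where
  "hmr_form m r e X1 Y1 X2 Y2 =
     mink3 X1 X2 - (1 / (1 + mink3 e e)) powr m *
        (mink3 Y1 Y2 + r * mink3 Y1 e * mink3 Y2 e)"

definition hmr_value :: "real \<Rightarrow> real \<Rightarrow> real \<Rightarrow> (real^3) \<times> (real^3) \<Rightarrow>
    (real^3) \<times> (real^3) \<Rightarrow> (real^3) \<times> (real^3) \<Rightarrow> real \<Rightarrow> bool" where
  "hmr_value c m r pe Z1 Z2 v \<longleftrightarrow>
     (let p = fst pe; e = snd pe in
       (\<exists>X1 Y1 X2 Y2. hv_decomp c p e Z1 X1 Y1 \<and> hv_decomp c p e Z2 X2 Y2) \<and>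
       (\<forall>X1 Y1 X2 Y2. hv_decomp c p e Z1 X1 Y1 \<and> hv_decomp c p e Z2 X2 Y2 \<longrightarrow>
           v = hmr_form m r e X1 Y1 X2 Y2))"

end

theory Submission
  imports Defs
begin

definition Qv :: "real^4 \<Rightarrow> real^3" where
  "Qv y = vector [2*(y$1*y$3+y$2*y$4), 2*(y$2*y$3-y$1*y$4), (y$1)^2+(y$2)^2+(y$3)^2+(y$4)^2]"
definition Rv :: "real^4 \<Rightarrow> real^3" where
  "Rv y = vector [-((y$1)^2-(y$2)^2+(y$3)^2-(y$4)^2), -2*(y$1*y$2-y$3*y$4), -2*(y$1*y$3-y$2*y$4)]"
definition dQv :: "real^4 \<Rightarrow> real^4 \<Rightarrow> real^3" where
  "dQv y w = vector [2*(w$1*y$3+y$1*w$3+w$2*y$4+y$2*w$4), 2*(w$2*y$3+y$2*w$3-w$1*y$4-y$1*w$4),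
      2*(y$1*w$1+y$2*w$2+y$3*w$3+y$4*w$4)]"
definition dRv :: "real^4 \<Rightarrow> real^4 \<Rightarrow> real^3" where
  "dRv y w = vector [-2*(y$1*w$1-y$2*w$2+y$3*w$3-y$4*w$4), -2*(w$1*y$2+y$1*w$2-w$3*y$4-y$3*w$4),
      -2*(w$1*y$3+y$1*w$3-w$2*y$4-y$2*w$4)]"

lemma vec3_eq: "(v::real^3) = w \<longleftrightarrow> v$1 = w$1 \<and> v$2 = w$2 \<and> v$3 = w$3"
  by (auto simp: vec_eq_iff forall_3)

lemma vec4_eq: "(v::real^4) = w \<longleftrightarrow> v$1 = w$1 \<and> v$2 = w$2 \<and> v$3 = w$3 \<and> v$4 = w$4"
  by (auto simp: vec_eq_iff forall_4)

lemma Fmap_eq: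
  assumes "c > 0"
  shows "Fmap c y = ((sqrt c / 4) *\<^sub>R Qv y, (c/4) *\<^sub>R Rv y)"
proof -
  define s where "s = sqrt c"
  have c: "c = s * s" using assms by (simp add: s_def)
  have spos: "s > 0" using assms by (simp add: s_def)
  have ss: "\<And>t. sqrt c * (sqrt c * t) = c * t" using assms by (simp add: mult.assoc[symmetric])
  have cm: "\<And>a b. cmod (Complex a b) * cmod (Complex a b) = a*a + b*b"
    by (metis cmod_power2 complex.sel power2_eq_square)
  show ?thesis
    unfolding Fmap_def Let_def rho1_def rho3_def Qv_def Rv_def z1_def z2_def s_def[symmetric]
    unfolding c
    using spos by (simp add: vec3_eq cm power2_eq_square field_simps)
qed

lemma vec3_deriv:
  assumes "(f1 has_derivative f1') F" "(f2 has_derivative f2') F" "(f3 has_derivative f3') F"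
  shows "((\<lambda>x. vector [f1 x, f2 x, f3 x] :: real^3) has_derivative (\<lambda>h. vector [f1' h, f2' h, f3' h])) F"
proof -
  define u1 :: "real^3" where "u1 = vector [1,0,0]"
  define u2 :: "real^3" where "u2 = vector [0,1,0]"
  define u3 :: "real^3" where "u3 = vector [0,0,1]"
  have e: "\<And>a b c. (vector [a, b, c] :: real^3) = a *\<^sub>R u1 + b *\<^sub>R u2 + c *\<^sub>R u3"
    by (simp add: vec3_eq u1_def u2_def u3_def)
  show ?thesis
    unfolding e
    by (rule has_derivative_add[OF has_derivative_add[OF has_derivative_scaleR_left[OF assms(1)]
      has_derivative_scaleR_left[OF assms(2)]] has_derivative_scaleR_left[OF assms(3)]])
qed

lemma nth_deriv: "((\<lambda>y::real^4. y $ i) has_derivative (\<lambda>h. h $ i)) F"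
  by (rule bounded_linear_imp_has_derivative) (rule bounded_linear_vec_nth)

lemma pd: "((\<lambda>x::real^4. x$i * x$j) has_derivative (\<lambda>h. h$i * y$j + y$i * h$j)) (at y)"
  by (rule has_derivative_eq_rhs, rule has_derivative_mult[OF nth_deriv nth_deriv]) (simp add: fun_eq_iff algebra_simps)

lemma Qv_deriv: "(Qv has_derivative dQv y) (at y)"
  unfolding Qv_def[abs_def] power2_eq_square
  apply (rule has_derivative_eq_rhs[OF vec3_deriv])
     apply (rule has_derivative_add has_derivative_diff has_derivative_mult_right pd)+
  apply (simp add: dQv_def vec3_eq fun_eq_iff algebra_simps)
  done

lemma Rv_deriv: "(Rv has_derivative dRv y) (at y)"
  unfolding Rv_def[abs_def] power2_eq_square
  apply (rule has_derivative_eq_rhs[OF vec3_deriv])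
     apply (rule has_derivative_add has_derivative_diff has_derivative_mult_right has_derivative_minus pd)+
  apply (simp add: dRv_def vec3_eq fun_eq_iff algebra_simps)
  done

lemma Fmap_deriv:
  assumes "c > 0"
  shows "(Fmap c has_derivative (\<lambda>w. ((sqrt c/4) *\<^sub>R dQv y w, (c/4) *\<^sub>R dRv y w))) (at y)"
proof -
  have "Fmap c = (\<lambda>y. ((sqrt c / 4) *\<^sub>R Qv y, (c/4) *\<^sub>R Rv y))"
    using Fmap_eq[OF assms] by (simp add: fun_eq_iff)
  then show ?thesis
    by (simp only:) (intro has_derivative_Pair has_derivative_scaleR_right Qv_deriv Rv_deriv)
qed

lemma mink3_scaleR_left[simp]: "mink3 (a *\<^sub>R u) v = a * mink3 u v"
  by (simp add: mink3_def algebra_simps)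
lemma mink3_scaleR_right[simp]: "mink3 u (a *\<^sub>R v) = a * mink3 u v"
  by (simp add: mink3_def algebra_simps)
lemma mink3_add_left[simp]: "mink3 (u + w) v = mink3 u v + mink3 w v"
  by (simp add: mink3_def algebra_simps)
lemma mink3_add_right[simp]: "mink3 u (v + w) = mink3 u v + mink3 u w"
  by (simp add: mink3_def algebra_simps)
lemma mink3_diff_left[simp]: "mink3 (u - w) v = mink3 u v - mink3 w v"
  by (simp add: mink3_def algebra_simps)
lemma mink3_diff_right[simp]: "mink3 u (v - w) = mink3 u v - mink3 u w"
  by (simp add: mink3_def algebra_simps)
lemma mink3_zero[simp]: "mink3 0 v = 0" "mink3 v 0 = 0"
  by (simp_all add: mink3_def)
lemma mink3_sym: "mink3 u v = mink3 v u"
  by (simp add: mink3_def algebra_simps)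

definition Tf :: "real^4 \<Rightarrow> real^4 \<Rightarrow> real" where
  "Tf y a = y$3*a$1 - y$4*a$2 - y$1*a$3 + y$2*a$4"

lemma A1: "mink3 (Qv y) (Qv y) = - ((mink4 y y)^2)"
  unfolding mink3_def mink4_def Qv_def vector_3 power2_eq_square by algebra
lemma A2: "mink3 (Rv y) (Rv y) = (mink4 y y)^2"
  unfolding mink3_def mink4_def Rv_def vector_3 power2_eq_square by algebra
lemma A3: "mink3 (Qv y) (Rv y) = 0"
  unfolding mink3_def mink4_def Qv_def Rv_def vector_3 power2_eq_square by algebra
lemma A4: "mink3 (Qv y) (dQv y w) = -2 * mink4 y y * mink4 y w"
  unfolding mink3_def mink4_def Qv_def dQv_def vector_3 power2_eq_square by algebra
lemma A5: "mink3 (Rv y) (dRv y w) = 2 * mink4 y y * mink4 y w"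
  unfolding mink3_def mink4_def Rv_def dRv_def vector_3 power2_eq_square by algebra
lemma A6: "mink3 (Qv y) (dRv y w) = - mink3 (dQv y w) (Rv y)"
  unfolding mink3_def mink4_def Qv_def Rv_def dRv_def dQv_def vector_3 power2_eq_square by algebra
lemma A7: "mink3 (dQv y w) (Rv y) = 2 * mink4 y y * Tf y w"
  unfolding mink3_def mink4_def Tf_def Rv_def dQv_def vector_3 power2_eq_square by algebra
lemma A8: "mink3 (dQv y a) (dQv y b) - mink3 (dRv y a) (dRv y b) =
   4 * Tf y a * Tf y b - 4 * mink4 y a * mink4 y b - 4 * mink4 y y * mink4 a b"
  unfolding mink3_def mink4_def Tf_def dRv_def dQv_def vector_3 power2_eq_square by algebra

lemma sq_c: "c > 0 \<Longrightarrow> sqrt c * sqrt c = (c::real)" by simp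

lemma geo_point:
  assumes c: "c > 0" and L: "mink4 y y = -4/c"
  shows "mink3 ((sqrt c/4) *\<^sub>R Qv y) ((sqrt c/4) *\<^sub>R Qv y) = -1/c"
    and "((sqrt c/4) *\<^sub>R Qv y) $ 3 > 0"
    and "mink3 ((c/4) *\<^sub>R Rv y) ((c/4) *\<^sub>R Rv y) = 1"
    and "mink3 ((sqrt c/4) *\<^sub>R Qv y) ((c/4) *\<^sub>R Rv y) = 0"
proof -
  have ss: "sqrt c * sqrt c = c" using c by simp
  show "mink3 ((sqrt c/4) *\<^sub>R Qv y) ((sqrt c/4) *\<^sub>R Qv y) = -1/c"
    using c by (simp add: A1 L ss power2_eq_square field_simps)
  show "mink3 ((c/4) *\<^sub>R Rv y) ((c/4) *\<^sub>R Rv y) = 1"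
    using c by (simp add: A2 L power2_eq_square field_simps)
  show "mink3 ((sqrt c/4) *\<^sub>R Qv y) ((c/4) *\<^sub>R Rv y) = 0"
    by (simp add: A3)
  have "Qv y $ 3 > 0"
  proof (rule ccontr)
    assume "\<not> Qv y $ 3 > 0"
    hence "(y$1)^2+(y$2)^2+(y$3)^2+(y$4)^2 \<le> 0" by (simp add: Qv_def)
    hence "y$1 = 0 \<and> y$2 = 0 \<and> y$3 = 0 \<and> y$4 = 0"
      by (smt (verit) power2_less_eq_zero_iff zero_le_power2)
    hence "mink4 y y = 0" by (simp add: mink4_def)
    with L c show False by simp
  qed
  then show "((sqrt c/4) *\<^sub>R Qv y) $ 3 > 0" using c by simp
qed

lemma geo_tan:
  assumes c: "c > 0" and L: "mink4 y y = -4/c" and w: "mink4 y w = 0"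
  shows "mink3 ((sqrt c/4) *\<^sub>R Qv y) ((sqrt c/4) *\<^sub>R dQv y w) = 0"
    and "mink3 ((sqrt c/4) *\<^sub>R Qv y) ((c/4) *\<^sub>R dRv y w) =
         - mink3 ((sqrt c/4) *\<^sub>R dQv y w) ((c/4) *\<^sub>R Rv y)"
    and "mink3 ((c/4) *\<^sub>R dRv y w) ((c/4) *\<^sub>R Rv y) = 0"
  using A4[of y w] A5[of y w] A6[of y w] w
  by (auto simp: mink3_sym[of "dRv y w"])

lemma geo_metric:
  assumes c: "c > 0" and L: "mink4 y y = -4/c" and w1: "mink4 y w1 = 0" and w2: "mink4 y w2 = 0"
  defines "p \<equiv> (sqrt c/4) *\<^sub>R Qv y" and "e \<equiv> (c/4) *\<^sub>R Rv y"
    and "X1 \<equiv> (sqrt c/4) *\<^sub>R dQv y w1" and "E1 \<equiv> (c/4) *\<^sub>R dRv y w1"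
    and "X2 \<equiv> (sqrt c/4) *\<^sub>R dQv y w2" and "E2 \<equiv> (c/4) *\<^sub>R dRv y w2"
  shows "mink3 X1 X2 - (1/c) * mink3 (E1 - (c * mink3 X1 e) *\<^sub>R p) (E2 - (c * mink3 X2 e) *\<^sub>R p)
         = mink4 w1 w2"
proof -
  have ss: "sqrt c * sqrt c = c" using c by simp
  have pp: "mink3 p p = -1/c" using geo_point[OF c L] by (simp add: p_def)
  have pE1: "mink3 p E1 = - mink3 X1 e" using geo_tan[OF c L w1] by (simp add: p_def E1_def X1_def e_def)
  have pE2: "mink3 p E2 = - mink3 X2 e" using geo_tan[OF c L w2] by (simp add: p_def E2_def X2_def e_def)
  have Y: "mink3 (E1 - (c * mink3 X1 e) *\<^sub>R p) (E2 - (c * mink3 X2 e) *\<^sub>R p)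
      = mink3 E1 E2 + c * mink3 X1 e * mink3 X2 e"
    using c by (simp add: pp pE2 pE1[unfolded mink3_sym[of p]] field_simps)
  have hX: "mink3 X1 X2 = c/16 * mink3 (dQv y w1) (dQv y w2)"
    using c by (simp add: X1_def X2_def ss)
  have hE: "mink3 E1 E2 = c*c/16 * mink3 (dRv y w1) (dRv y w2)"
    by (simp add: E1_def E2_def)
  have he1: "mink3 X1 e = - sqrt c / 2 * Tf y w1"
    using c by (simp add: X1_def e_def A7 L field_simps)
  have he2: "mink3 X2 e = - sqrt c / 2 * Tf y w2"
    using c by (simp add: X2_def e_def A7 L field_simps)
  have a8: "mink3 (dQv y w1) (dQv y w2) = mink3 (dRv y w1) (dRv y w2) + 4 * Tf y w1 * Tf y w2
       + 16 / c * mink4 w1 w2"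
    using A8[of y w1 w2] w1 w2 L by simp
  show ?thesis
    apply (subst Y)
    apply (simp only: hX hE he1 he2 a8)
    using c by (simp add: field_simps ss)
qed

lemma vd_nth:
  assumes "(f has_vector_derivative f') F"
  shows "((\<lambda>t. f t $ i) has_real_derivative f' $ i) F"
proof -
  have "((\<lambda>t. f t $ i) has_derivative (\<lambda>h. (h *\<^sub>R f') $ i)) F"
    using bounded_linear.has_derivative[OF bounded_linear_vec_nth assms[unfolded has_vector_derivative_def]] .
  moreover have "(\<lambda>h. (h *\<^sub>R f') $ i) = (*) (f' $ i)" by (auto simp: fun_eq_iff)
  ultimately show ?thesis by (simp add: has_field_derivative_def)
qed

lemma mink3_vderiv:
  assumes "(f has_vector_derivative f') (at x)" "(g has_vector_derivative g') (at x)"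
  shows "((\<lambda>t. mink3 (f t) (g t)) has_real_derivative (mink3 f' (g x) + mink3 (f x) g')) (at x)"
  unfolding mink3_def
  apply (rule DERIV_cong)
   apply (rule derivative_intros vd_nth assms)+
  apply (simp add: algebra_simps)
  done

lemma hlift_unique:
  assumes "hlift c p e X H"
  shows "H = (X, (c * mink3 X e) *\<^sub>R p)"
proof -
  obtain \<gamma> V \<epsilon> where eps: "(\<epsilon>::real) > 0" and g0: "\<gamma> 0 = p" and V0: "V 0 = e"
    and all: "\<forall>t\<in>{-\<epsilon><..<\<epsilon>}. \<gamma> t \<in> H2 c \<and> mink3 (\<gamma> t) (V t) = 0 \<and>
            \<gamma> differentiable (at t) \<and> V differentiable (at t) \<and>
            tanproj c (\<gamma> t) (vector_derivative V (at t)) = 0"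
    and gX: "vector_derivative \<gamma> (at 0) = X"
    and H: "H = (X, vector_derivative V (at 0))"
    using assms unfolding hlift_def by blast
  define W where "W = vector_derivative V (at 0)"
  have z: "(0::real) \<in> {-\<epsilon><..<\<epsilon>}" using eps by simp
  have dg: "(\<gamma> has_vector_derivative X) (at 0)"
    using all z gX vector_derivative_works by blast
  have dV: "(V has_vector_derivative W) (at 0)"
    using all z W_def vector_derivative_works by blast
  have d1: "((\<lambda>t. mink3 (\<gamma> t) (V t)) has_real_derivative (mink3 X e + mink3 p W)) (at 0)"
    using mink3_vderiv[OF dg dV] g0 V0 by simp
  have d2: "((\<lambda>t. mink3 (\<gamma> t) (V t)) has_real_derivative 0) (at 0)"
    apply (rule has_field_derivative_transform_within_open[of "\<lambda>t. 0" 0 0 "{-\<epsilon><..<\<epsilon>}"])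
    using all z by auto
  have k: "mink3 X e + mink3 p W = 0" using DERIV_unique[OF d1 d2] .
  have tp: "tanproj c p W = 0" using all z g0 W_def by auto
  hence "W = - (c * mink3 W p) *\<^sub>R p" unfolding tanproj_def
    by (simp add: eq_neg_iff_add_eq_0)
  also have "mink3 W p = - mink3 X e" using k mink3_sym[of W p] by simp
  finally have "W = (c * mink3 X e) *\<^sub>R p" by simp
  then show ?thesis using H W_def by simp
qed

lemma scal_vderiv:
  "(g has_real_derivative g') (at t) \<Longrightarrow> ((\<lambda>t. g t *\<^sub>R (v::real^3)) has_vector_derivative g' *\<^sub>R v) (at t)"
  using has_vector_derivative_scaleR[OF _ has_vector_derivative_const, of g g' t UNIV v] by simp

lemma dd1: fixes K t :: real assumes D: "1 - K*t*t \<noteq> 0"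
  shows "((\<lambda>t. (1 + K*t*t)/(1 - K*t*t)) has_real_derivative (4*K*t/(1 - K*t*t)^2)) (at t)"
proof -
  have D': "K*t*t \<noteq> 1" using D by simp
  have "((\<lambda>t. (1 + K*t*t)/(1 - K*t*t)) has_real_derivative
     ((K*t + K*t) * (1 - K*t*t) - (1 + K*t*t) * (-(K*t + K*t))) / ((1 - K*t*t)*(1 - K*t*t))) (at t)"
    by (rule DERIV_divide) (auto intro!: derivative_eq_intros simp: D D')
  thus ?thesis using D by (simp add: power2_eq_square algebra_simps) 
qed
lemma dd2: fixes K t :: real assumes D: "1 - K*t*t \<noteq> 0"
  shows "((\<lambda>t. t/(1 - K*t*t)) has_real_derivative ((1 + K*t*t)/(1 - K*t*t)^2)) (at t)"
proof -
  have D': "K*t*t \<noteq> 1" using D by simp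
  have "((\<lambda>t. t/(1 - K*t*t)) has_real_derivative
     (1 * (1 - K*t*t) - t * (-(K*t + K*t))) / ((1 - K*t*t)*(1 - K*t*t))) (at t)"
    by (rule DERIV_divide) (auto intro!: derivative_eq_intros simp: D D')
  thus ?thesis using D by (simp add: power2_eq_square algebra_simps) 
qed
lemma dd3: fixes K t a c :: real assumes D: "1 - K*t*t \<noteq> 0"
  shows "((\<lambda>t. a*c*t/(1 - K*t*t)) has_real_derivative (a*c*(1 + K*t*t)/(1 - K*t*t)^2)) (at t)"
proof -
  have "((\<lambda>t. a*c * (t/(1 - K*t*t))) has_real_derivative a*c*((1 + K*t*t)/(1 - K*t*t)^2)) (at t)"
    by (rule DERIV_cmult) (rule dd2[OF D])
  thus ?thesis by (simp add: times_divide_eq_right mult.assoc)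
qed
lemma dd4: fixes K t a c :: real assumes D: "1 - K*t*t \<noteq> 0"
  shows "((\<lambda>t. a*c*t*t/(2*(1 - K*t*t))) has_real_derivative (a*c*t/(1 - K*t*t)^2)) (at t)"
proof -
  have D': "K*t*t \<noteq> 1" using D by simp
  have "((\<lambda>t. a*c*t*t/(2*(1 - K*t*t))) has_real_derivative
     ((a*c*t + a*c*t) * (2*(1 - K*t*t)) - (a*c*t*t) * (2*(-(K*t + K*t)))) / ((2*(1 - K*t*t))*(2*(1 - K*t*t)))) (at t)"
    by (rule DERIV_divide) (auto intro!: derivative_eq_intros simp: D D')
  moreover have "(a*c*t + a*c*t) * (2*(1 - K*t*t)) - (a*c*t*t) * (2*(-(K*t + K*t))) = 4*(a*c*t)"
    by (simp add: algebra_simps)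
  moreover have "(2*(1 - K*t*t))*(2*(1 - K*t*t)) = 4*((1 - K*t*t)^2)"
    by (simp add: power2_eq_square algebra_simps)
  ultimately show ?thesis by simp
qed

lemma aux1:
  fixes D K t c :: real
  assumes "D \<noteq> 0" "c \<noteq> 0" "D = 1 - K*t*t"
  shows "(1+K*t*t)/D * ((1+K*t*t)/D * (-1/c)) + t/D * (t/D * (4*K/c)) = -1/c"
proof -
  have "(1+K*t*t)/D * ((1+K*t*t)/D * (-1/c)) + t/D * (t/D * (4*K/c)) = (-((1+K*t*t)*(1+K*t*t)) + 4*K*t*t)/(D*D*c)"
    using assms(1,2) by (simp add: field_simps)
  also have "-((1+K*t*t)*(1+K*t*t)) + 4*K*t*t = -(D*D)" by (simp add: assms(3) algebra_simps)
  finally show ?thesis using assms(1,2) by simp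
qed
lemma aux2:
  fixes D K t c a :: real
  assumes "D \<noteq> 0" "c \<noteq> 0" "D = 1 - K*t*t"
  shows "(1+K*t*t)/D * (a*c*t/D * (-1/c)) + t/D * a + t/D * (a*c*t*t/(2*D) * (4*K/c)) = 0"
proof -
  have "(1+K*t*t)/D * (a*c*t/D * (-1/c)) + t/D * a + t/D * (a*c*t*t/(2*D) * (4*K/c)) = 
     (-(1+K*t*t)*a*t + t*a*D + 2*K*a*t*t*t)/(D*D)"
    using assms(1,2) by (simp add: field_simps)
  also have "-(1+K*t*t)*a*t + t*a*D + 2*K*a*t*t*t = 0" by (simp add: assms(3) algebra_simps)
  finally show ?thesis by simp
qed

lemma hlift_exists:
  assumes c: "c > 0" and p: "p \<in> H2 c" and pe: "mink3 p e = 0" and pX: "mink3 p X = 0"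
  shows "hlift c p e X (X, (c * mink3 X e) *\<^sub>R p)"
proof -
  define K where "K = c * mink3 X X / 4"
  define a where "a = mink3 e X"
  define g1 where "g1 = (\<lambda>t::real. (1 + K*t*t)/(1 - K*t*t))"
  define g2 where "g2 = (\<lambda>t::real. t/(1 - K*t*t))"
  define v1 where "v1 = (\<lambda>t::real. a*c*t/(1 - K*t*t))"
  define v2 where "v2 = (\<lambda>t::real. a*c*t*t/(2*(1 - K*t*t)))"
  define \<gamma> where "\<gamma> = (\<lambda>t::real. g1 t *\<^sub>R p + g2 t *\<^sub>R X)"
  define V where "V = (\<lambda>t::real. e + v1 t *\<^sub>R p + v2 t *\<^sub>R X)"
  have pp: "mink3 p p = -1/c" and p3: "p$3 > 0" using p by (auto simp: H2_def)
  define \<epsilon> where "\<epsilon> = 1/(2 + 2*\<bar>K\<bar> + 2*\<bar>X$3\<bar>/p$3)"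
  have den: "2 + 2*\<bar>K\<bar> + 2*\<bar>X$3\<bar>/p$3 \<ge> 2" using p3 by simp
  have epos: "\<epsilon> > 0" using den by (simp add: \<epsilon>_def)
  have ehalf: "\<epsilon> \<le> 1/2" using den by (simp add: \<epsilon>_def field_simps)
  have eK: "\<bar>K\<bar> * \<epsilon> \<le> 1/2"
  proof -
    have "2*\<bar>K\<bar> \<le> 2 + 2*\<bar>K\<bar> + 2*\<bar>X$3\<bar>/p$3" using p3 by simp
    thus ?thesis using den by (simp add: \<epsilon>_def field_simps)
  qed
  have eX: "\<bar>X$3\<bar> * \<epsilon> < p$3 / 2"
  proof -
    have lt: "2*\<bar>X$3\<bar>/p$3 < 2 + 2*\<bar>K\<bar> + 2*\<bar>X$3\<bar>/p$3" by simp
    have "2*\<bar>X$3\<bar>/p$3 * \<epsilon> = (2*\<bar>X$3\<bar>/p$3) / (2 + 2*\<bar>K\<bar> + 2*\<bar>X$3\<bar>/p$3)"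
      by (simp add: \<epsilon>_def)
    also have "\<dots> < 1"
      using divide_less_eq_1_pos[of "2 + 2*\<bar>K\<bar> + 2*\<bar>X$3\<bar>/p$3" "2*\<bar>X$3\<bar>/p$3"] lt den by linarith
    finally have "2*\<bar>X$3\<bar>/p$3 * \<epsilon> < 1" .
    thus ?thesis using p3 by (simp add: field_simps)
  qed
  have Ksmall: "\<bar>K*t*t\<bar> \<le> 1/2" if t: "t \<in> {-\<epsilon><..<\<epsilon>}" for t
  proof -
    have at: "\<bar>t\<bar> < \<epsilon>" using t by auto
    have "\<bar>K*t*t\<bar> = \<bar>K\<bar> * \<bar>t\<bar> * \<bar>t\<bar>" by (simp add: abs_mult)
    also have "\<dots> \<le> \<bar>K\<bar> * \<epsilon> * 1"
      using at ehalf by (intro mult_mono) auto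
    finally show ?thesis using eK by simp
  qed
  have Dpos: "1 - K*t*t > 0" if t: "t \<in> {-\<epsilon><..<\<epsilon>}" for t
    using Ksmall[OF t] by linarith
  have XX: "mink3 X X = 4*K/c" using c by (simp add: K_def)
  have gg: "mink3 (\<gamma> t) (\<gamma> t) = -1/c" if t: "t \<in> {-\<epsilon><..<\<epsilon>}" for t
  proof -
    have D: "1 - K*t*t \<noteq> 0" using Dpos[OF t] by simp
    have "mink3 (\<gamma> t) (\<gamma> t) = g1 t * (g1 t * (-1/c)) + g2 t * (g2 t * (4*K/c))"
      unfolding \<gamma>_def by (simp add: pp pX mink3_sym[of X p] XX algebra_simps)
    also have "\<dots> = -1/c" unfolding g1_def g2_def
      by (rule aux1[OF D]) (use c in auto)
    finally show ?thesis .
  qed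
  have g3: "\<gamma> t $ 3 > 0" if t: "t \<in> {-\<epsilon><..<\<epsilon>}" for t
  proof -
    have D: "1 - K*t*t > 0" using Dpos[OF t] .
    have at: "\<bar>t\<bar> < \<epsilon>" using t by auto
    have "\<bar>t * X$3\<bar> \<le> \<epsilon> * \<bar>X$3\<bar>" using at by (simp add: abs_mult mult_right_mono)
    hence tx: "\<bar>t * X$3\<bar> < p$3/2" using eX by (simp add: mult.commute)
    have "(1 + K*t*t) * p$3 \<ge> p$3 / 2"
    proof -
      have "1 + K*t*t \<ge> 1/2" using Ksmall[OF t] by linarith
      thus ?thesis using p3 mult_right_mono[of "1/2" "1 + K*t*t" "p$3"] by simp
    qed
    hence num: "(1 + K*t*t) * p$3 + t * X$3 > 0" using tx by linarith
    have "\<gamma> t $ 3 = ((1 + K*t*t) * p$3 + t * X$3) / (1 - K*t*t)"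
    proof -
      have gen: "(x/d) * u + (y/d) * v = (x * u + y * v)/d" for x y u v d :: real
        by (simp add: add_divide_distrib)
      show ?thesis unfolding \<gamma>_def g1_def g2_def by (simp only: vector_add_component vector_scaleR_component real_scaleR_def gen)
    qed
    thus ?thesis using num D by simp
  qed
  have gV: "mink3 (\<gamma> t) (V t) = 0" if t: "t \<in> {-\<epsilon><..<\<epsilon>}" for t
  proof -
    have D: "1 - K*t*t \<noteq> 0" using Dpos[OF t] by simp
    have "mink3 (\<gamma> t) (V t) = g1 t * (v1 t * (-1/c)) + g2 t * a + g2 t * (v2 t * (4*K/c))"
      unfolding \<gamma>_def V_def
      by (simp add: pp pX pe mink3_sym[of X p] mink3_sym[of X e] a_def[symmetric] XX algebra_simps)
    also have "\<dots> = 0" unfolding g1_def g2_def v1_def v2_def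
      by (rule aux2[OF D]) (use c in auto)
    finally show ?thesis .
  qed
  have dg: "(\<gamma> has_vector_derivative ((4*K*t/(1 - K*t*t)^2) *\<^sub>R p + ((1 + K*t*t)/(1 - K*t*t)^2) *\<^sub>R X)) (at t)"
    if t: "t \<in> {-\<epsilon><..<\<epsilon>}" for t
  proof -
    have D: "1 - K*t*t \<noteq> 0" using Dpos[OF t] by simp
    note d1 = dd1[OF D] and d2 = dd2[OF D]
    show ?thesis unfolding \<gamma>_def g1_def g2_def
      by (rule has_vector_derivative_add[OF scal_vderiv[OF d1] scal_vderiv[OF d2]])
  qed
  have dV: "(V has_vector_derivative ((a*c*(1 + K*t*t)/(1 - K*t*t)^2) *\<^sub>R p + (a*c*t/(1 - K*t*t)^2) *\<^sub>R X)) (at t)"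
    if t: "t \<in> {-\<epsilon><..<\<epsilon>}" for t
  proof -
    have D: "1 - K*t*t \<noteq> 0" using Dpos[OF t] by simp
    note d1 = dd3[OF D, of a c] and d2 = dd4[OF D, of a c]
    have "((\<lambda>t. e + (a*c*t/(1 - K*t*t)) *\<^sub>R p + (a*c*t*t/(2*(1 - K*t*t))) *\<^sub>R X) has_vector_derivative
        0 + (a*c*(1 + K*t*t)/(1 - K*t*t)^2) *\<^sub>R p + (a*c*t/(1 - K*t*t)^2) *\<^sub>R X) (at t)"
      by (intro has_vector_derivative_add has_vector_derivative_const scal_vderiv d1 d2)
    thus ?thesis unfolding V_def v1_def v2_def by simp
  qed
  have tp: "tanproj c (\<gamma> t) (vector_derivative V (at t)) = 0" if t: "t \<in> {-\<epsilon><..<\<epsilon>}" for t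
  proof -
    have D: "1 - K*t*t \<noteq> 0" using Dpos[OF t] by simp
    have "vector_derivative V (at t) = (a*c*(1 + K*t*t)/(1 - K*t*t)^2) *\<^sub>R p + (a*c*t/(1 - K*t*t)^2) *\<^sub>R X"
      using dV[OF t] by (rule vector_derivative_at)
    also have "\<dots> = (a*c/(1 - K*t*t)) *\<^sub>R \<gamma> t"
      unfolding \<gamma>_def g1_def g2_def using D by (simp add: scaleR_add_right power2_eq_square)
    finally have vd: "vector_derivative V (at t) = (a*c/(1 - K*t*t)) *\<^sub>R \<gamma> t" .
    show ?thesis unfolding vd tanproj_def using gg[OF t] c
      by (simp add: field_simps)
  qed
  have z: "(0::real) \<in> {-\<epsilon><..<\<epsilon>}" using epos by simp
  have gd0: "vector_derivative \<gamma> (at 0) = X"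
    using vector_derivative_at[OF dg[OF z]] by simp
  have Vd0: "vector_derivative V (at 0) = (c * mink3 X e) *\<^sub>R p"
    using vector_derivative_at[OF dV[OF z]] by (simp add: a_def mink3_sym[of e X] mult.commute)
  show ?thesis
    unfolding hlift_def
  proof (intro exI conjI)
    show "\<epsilon> > 0" by (rule epos)
    show "\<gamma> 0 = p" by (simp add: \<gamma>_def g1_def g2_def)
    show "V 0 = e" by (simp add: V_def v1_def v2_def)
    show "\<forall>t\<in>{-\<epsilon><..<\<epsilon>}. \<gamma> t \<in> H2 c \<and> mink3 (\<gamma> t) (V t) = 0 \<and>
            \<gamma> differentiable (at t) \<and> V differentiable (at t) \<and>
            tanproj c (\<gamma> t) (vector_derivative V (at t)) = 0"
    proof
      fix t assume t: "t \<in> {-\<epsilon><..<\<epsilon>}"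
      show "\<gamma> t \<in> H2 c \<and> mink3 (\<gamma> t) (V t) = 0 \<and>
            \<gamma> differentiable (at t) \<and> V differentiable (at t) \<and>
            tanproj c (\<gamma> t) (vector_derivative V (at t)) = 0"
        using gg[OF t] g3[OF t] gV[OF t] differentiableI_vector[OF dg[OF t]]
          differentiableI_vector[OF dV[OF t]] tp[OF t] by (simp add: H2_def)
    qed
    show "vector_derivative \<gamma> (at 0) = X" by (rule gd0)
    show "(X, (c * mink3 X e) *\<^sub>R p) = (X, vector_derivative V (at 0))" by (simp add: Vd0)
  qed
qed

lemma half_powr_log: "(c::real) > 0 \<Longrightarrow> (1/2) powr (log 2 c) = 1/c"
  by (simp add: powr_divide)

lemma hmr_main:
  assumes c: "c > 0" and p: "p \<in> H2 c" and ee: "mink3 e e = 1" and pe: "mink3 p e = 0"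
    and pX1: "mink3 p X1 = 0" and pX2: "mink3 p X2 = 0"
    and pE1: "mink3 p E1 = - mink3 X1 e" and pE2: "mink3 p E2 = - mink3 X2 e"
    and E1e: "mink3 E1 e = 0" and E2e: "mink3 E2 e = 0"
    and v: "v = mink3 X1 X2 - (1/c) * mink3 (E1 - (c * mink3 X1 e) *\<^sub>R p) (E2 - (c * mink3 X2 e) *\<^sub>R p)"
  shows "hmr_value c (log 2 c) r (p, e) (X1, E1) (X2, E2) v"
proof -
  have pp: "mink3 p p = -1/c" using p by (simp add: H2_def)
  have dec: "hv_decomp c p e (X, E) X (E - (c * mink3 X e) *\<^sub>R p)"
    if pX: "mink3 p X = 0" and pE: "mink3 p E = - mink3 X e" for X E
  proof -
    have "mink3 p (E - (c * mink3 X e) *\<^sub>R p) = 0"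
      using c by (simp add: pE pp)
    moreover have "hlift c p e X (X, (c * mink3 X e) *\<^sub>R p)"
      by (rule hlift_exists[OF c p pe pX])
    moreover have "(X, E) = (X, (c * mink3 X e) *\<^sub>R p) + vlift (E - (c * mink3 X e) *\<^sub>R p)"
      by (simp add: vlift_def)
    ultimately show ?thesis unfolding hv_decomp_def by blast
  qed
  have uniq: "X' = X \<and> Y' = E - (c * mink3 X e) *\<^sub>R p"
    if hd: "hv_decomp c p e (X, E) X' Y'" for X E X' Y'
  proof -
    obtain H where H: "hlift c p e X' H" and Z: "(X, E) = H + vlift Y'"
      using hd unfolding hv_decomp_def by blast
    have "H = (X', (c * mink3 X' e) *\<^sub>R p)" by (rule hlift_unique[OF H])
    with Z have "X = X'" "E = (c * mink3 X' e) *\<^sub>R p + Y'" by (simp_all add: vlift_def)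
    thus ?thesis by simp
  qed
  have Ye: "mink3 (E - (c * mink3 X e) *\<^sub>R p) e = 0" if "mink3 E e = 0" for X E
    using that by (simp add: pe)
  show ?thesis
    unfolding hmr_value_def Let_def fst_conv snd_conv
  proof (intro conjI allI impI)
    show "\<exists>X1a Y1 X2a Y2. hv_decomp c p e (X1, E1) X1a Y1 \<and> hv_decomp c p e (X2, E2) X2a Y2"
      using dec[OF pX1 pE1] dec[OF pX2 pE2] by blast
    fix X1' Y1 X2' Y2
    assume h: "hv_decomp c p e (X1, E1) X1' Y1 \<and> hv_decomp c p e (X2, E2) X2' Y2"
    have u1: "X1' = X1 \<and> Y1 = E1 - (c * mink3 X1 e) *\<^sub>R p" using uniq h by blast
    have u2: "X2' = X2 \<and> Y2 = E2 - (c * mink3 X2 e) *\<^sub>R p" using uniq h by blast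
    show "v = hmr_form (log 2 c) r e X1' Y1 X2' Y2"
      unfolding hmr_form_def using u1 u2 Ye[OF E1e, of X1] Ye[OF E2e, of X2] ee c
      by (simp add: half_powr_log v)
  qed
qed

lemma mink4_diff_right: "mink4 w (a - b) = mink4 w a - mink4 w b"
  by (simp add: mink4_def algebra_simps)
lemma mink4_scaleR_right: "mink4 w (k *\<^sub>R a) = k * mink4 w a"
  by (simp add: mink4_def algebra_simps)
lemma mink4_sym: "mink4 a b = mink4 b a"
  by (simp add: mink4_def algebra_simps)

lemma mink4_diff_left: "mink4 (a - b) w = mink4 a w - mink4 b w"
  by (simp add: mink4_def algebra_simps)

lemma mink4_nondeg:
  assumes L: "mink4 y y \<noteq> 0" and D: "mink4 y d = 0"
    and all: "\<And>w. mink4 y w = 0 \<Longrightarrow> mink4 d w = 0"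
  shows "d = 0"
proof -
  have any: "mink4 d v = 0" for v
  proof -
    define w where "w = v - (mink4 y v / mink4 y y) *\<^sub>R y"
    have "mink4 y w = mink4 y v - (mink4 y v / mink4 y y) * mink4 y y"
      by (simp only: w_def mink4_diff_right mink4_scaleR_right)
    hence "mink4 y w = 0" using L by simp
    hence "mink4 d w = 0" by (rule all)
    moreover have "mink4 d w = mink4 d v - (mink4 y v / mink4 y y) * mink4 d y"
      by (simp only: w_def mink4_diff_right mink4_scaleR_right)
    moreover have "mink4 d y = 0" using D mink4_sym[of d y] by simp
    ultimately show ?thesis by simp
  qed
  define v :: "real^4" where "v = (\<chi> i. if i = 3 \<or> i = 4 then - d$i else d$i)"
  have "mink4 d v = (d$1)^2 + (d$2)^2 + (d$3)^2 + (d$4)^2"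
    by (simp add: v_def mink4_def power2_eq_square)
  hence "(d$1)^2 + (d$2)^2 + (d$3)^2 + (d$4)^2 = 0" using any by simp
  hence "d$1 = 0 \<and> d$2 = 0 \<and> d$3 = 0 \<and> d$4 = 0"
    by (smt (verit) power2_less_eq_zero_iff zero_le_power2)
  thus ?thesis by (simp add: vec4_eq)
qed

theorem theorem2:
  fixes c r :: real
  assumes "c > 0" and "r \<ge> 0"
  shows "\<forall>y \<in> AdS (c / 4).
           Fmap c y \<in> T1H2 c \<and>
           Fmap c differentiable (at y) \<and>
           inj_on (frechet_derivative (Fmap c) (at y)) (TanAdS y) \<and>
           (\<forall>W1 \<in> TanAdS y. \<forall>W2 \<in> TanAdS y.
              hmr_value c (log 2 c) r (Fmap c y)
                (frechet_derivative (Fmap c) (at y) W1)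
                (frechet_derivative (Fmap c) (at y) W2)
                (mink4 W1 W2))"
proof
  fix y assume y: "y \<in> AdS (c / 4)"
  have c: "c > 0" by (rule assms(1))
  have L: "mink4 y y = -4/c" using y c by (simp add: AdS_def)
  define p where "p = (sqrt c/4) *\<^sub>R Qv y"
  define e where "e = (c/4) *\<^sub>R Rv y"
  define DF where "DF = (\<lambda>w. ((sqrt c/4) *\<^sub>R dQv y w, (c/4) *\<^sub>R dRv y w))"
  have Fy: "Fmap c y = (p, e)" using Fmap_eq[OF c] by (simp add: p_def e_def)
  have hd: "(Fmap c has_derivative DF) (at y)" unfolding DF_def by (rule Fmap_deriv[OF c])
  have fd: "frechet_derivative (Fmap c) (at y) = DF"
    using frechet_derivative_at[OF hd] by simp
  note gp = geo_point[OF c L, folded p_def e_def]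
  have pH: "p \<in> H2 c" using gp by (simp add: H2_def)
  have G: "mink4 w1 w2 = mink3 (fst (DF w1)) (fst (DF w2)) - (1/c) *
      mink3 (snd (DF w1) - (c * mink3 (fst (DF w1)) e) *\<^sub>R p) (snd (DF w2) - (c * mink3 (fst (DF w2)) e) *\<^sub>R p)"
    if "mink4 y w1 = 0" "mink4 y w2 = 0" for w1 w2
    unfolding DF_def p_def e_def fst_conv snd_conv using geo_metric[OF c L that] by (rule sym)
  show "Fmap c y \<in> T1H2 c \<and>
           Fmap c differentiable (at y) \<and>
           inj_on (frechet_derivative (Fmap c) (at y)) (TanAdS y) \<and>
           (\<forall>W1 \<in> TanAdS y. \<forall>W2 \<in> TanAdS y.
              hmr_value c (log 2 c) r (Fmap c y)
                (frechet_derivative (Fmap c) (at y) W1)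
                (frechet_derivative (Fmap c) (at y) W2)
                (mink4 W1 W2))"
  proof (intro conjI)
    show "Fmap c y \<in> T1H2 c" using gp pH by (simp add: Fy T1H2_def)
    show "Fmap c differentiable (at y)" using hd by (rule differentiableI)
    show "inj_on (frechet_derivative (Fmap c) (at y)) (TanAdS y)"
      unfolding fd
    proof (rule inj_onI)
      fix w1 w2 assume w1: "w1 \<in> TanAdS y" and w2: "w2 \<in> TanAdS y" and eq: "DF w1 = DF w2"
      have t1: "mink4 y w1 = 0" and t2: "mink4 y w2 = 0" using w1 w2 by (auto simp: TanAdS_def)
      have "w1 - w2 = 0"
      proof (rule mink4_nondeg)
        show "mink4 y y \<noteq> 0" using L c by simp
        show "mink4 y (w1 - w2) = 0" using t1 t2 by (simp add: mink4_def algebra_simps)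
        fix w assume tw: "mink4 y w = 0"
        show "mink4 (w1 - w2) w = 0"
          unfolding mink4_diff_left using G[OF t1 tw] G[OF t2 tw] eq by simp
      qed
      thus "w1 = w2" by simp
    qed
    show "\<forall>W1 \<in> TanAdS y. \<forall>W2 \<in> TanAdS y.
              hmr_value c (log 2 c) r (Fmap c y)
                (frechet_derivative (Fmap c) (at y) W1)
                (frechet_derivative (Fmap c) (at y) W2)
                (mink4 W1 W2)"
    proof (intro ballI)
      fix w1 w2 assume w1: "w1 \<in> TanAdS y" and w2: "w2 \<in> TanAdS y"
      have t1: "mink4 y w1 = 0" and t2: "mink4 y w2 = 0" using w1 w2 by (auto simp: TanAdS_def)
      note gt1 = geo_tan[OF c L t1, folded p_def e_def] and gt2 = geo_tan[OF c L t2, folded p_def e_def]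
      have "hmr_value c (log 2 c) r (p, e) (fst (DF w1), snd (DF w1)) (fst (DF w2), snd (DF w2)) (mink4 w1 w2)"
        unfolding DF_def fst_conv snd_conv
        by (rule hmr_main[OF c pH gp(3) gp(4) gt1(1) gt2(1) gt1(2) gt2(2) gt1(3) gt2(3)
             G[OF t1 t2, unfolded DF_def fst_conv snd_conv]])
      thus "hmr_value c (log 2 c) r (Fmap c y)
                (frechet_derivative (Fmap c) (at y) w1)
                (frechet_derivative (Fmap c) (at y) w2)
                (mink4 w1 w2)" by (simp add: Fy fd)
    qed
  qed
qed

end
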